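(* Let $\mathscr{H}$ be a complex Hilbert space, $N(\cdot)$ a norm on $\mathbb{B}(\mathscr{H})$, and $T\in\mathbb{B}(\mathscr{H})$. Then $$\frac12\max\{w_N(T+T^* ),w_N(T-T^* )\}\leq w_N(T)\leq\frac12\sqrt{w_N^2(T+T^* )+w_N^2(T-T^* )}.$$
   Context: For $T\in\mathbb{B}(\mathscr{H})$: $\Re(T)=\frac12(T+T^* )$ and $w_N(T)=\sup_{\theta\in\mathbb{R}}N(\Re(e^{i\theta}T))$. *)

theory Defs
  imports "HOL-Analysis.Analysis"
begin

text \<open>HOL-Analysis only provides real inner product spaces, so we introduce complex
ones.  The inner product is linear in the second argument and conjugate-linear in the
first; the (real) norm of the underlying normed space is the one induced by it.\<close>

class complex_inner = real_normed_vector +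
  fixes scaleC :: "complex \<Rightarrow> 'a \<Rightarrow> 'a"
  fixes cinner :: "'a \<Rightarrow> 'a \<Rightarrow> complex"
  assumes scaleC_add_right: "scaleC a (x + y) = scaleC a x + scaleC a y"
    and scaleC_add_left: "scaleC (a + b) x = scaleC a x + scaleC b x"
    and scaleC_scaleC: "scaleC a (scaleC b x) = scaleC (a * b) x"
    and scaleC_one: "scaleC 1 x = x"
    and scaleC_of_real: "scaleC (complex_of_real r) x = r *\<^sub>R x"
    and cinner_conj: "cinner x y = cnj (cinner y x)"
    and cinner_add_right: "cinner x (y + z) = cinner x y + cinner x z"
    and cinner_scaleC_right: "cinner x (scaleC a y) = a * cinner x y"
    and cinner_self_norm: "cinner x x = complex_of_real ((norm x)\<^sup>2)"

class complex_hilbert = complex_inner + complete_space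

text \<open>Consistency check: the complex numbers form a complex Hilbert space.\<close>

instantiation complex :: complex_inner
begin
definition scaleC_complex :: "complex \<Rightarrow> complex \<Rightarrow> complex" where
  "scaleC_complex a x = a * x"
definition cinner_complex :: "complex \<Rightarrow> complex \<Rightarrow> complex" where
  "cinner_complex x y = cnj x * y"
instance
proof
  fix a b :: complex and x y z :: complex and r :: real
  show "scaleC a (x + y) = scaleC a x + scaleC a y" by (simp add: scaleC_complex_def distrib_left)
  show "scaleC (a + b) x = scaleC a x + scaleC b x" by (simp add: scaleC_complex_def distrib_right)
  show "scaleC a (scaleC b x) = scaleC (a * b) x" by (simp add: scaleC_complex_def mult.assoc)
  show "scaleC 1 x = x" by (simp add: scaleC_complex_def)
  show "scaleC (complex_of_real r) x = r *\<^sub>R x" by (simp add: scaleC_complex_def scaleR_conv_of_real)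
  show "cinner x y = cnj (cinner y x)" by (simp add: cinner_complex_def mult.commute)
  show "cinner x (y + z) = cinner x y + cinner x z" by (simp add: cinner_complex_def distrib_left)
  show "cinner x (scaleC a y) = a * cinner x y" by (simp add: cinner_complex_def scaleC_complex_def mult.left_commute)
  show "cinner x x = complex_of_real ((norm x)\<^sup>2)" by (simp add: cinner_complex_def complex_norm_square mult.commute del: of_real_power)
qed
end

instance complex :: complex_hilbert ..

definition bounded_op :: "('a::complex_inner \<Rightarrow> 'a) \<Rightarrow> bool" where
  "bounded_op T \<longleftrightarrow> bounded_linear T \<and> (\<forall>c x. T (scaleC c x) = scaleC c (T x))"

definition adj :: "('a::complex_inner \<Rightarrow> 'a) \<Rightarrow> ('a \<Rightarrow> 'a)" where
  "adj T = (THE S. \<forall>x y. cinner (T x) y = cinner x (S y))"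

definition re_op :: "('a::complex_inner \<Rightarrow> 'a) \<Rightarrow> ('a \<Rightarrow> 'a)" where
  "re_op T = (\<lambda>x. scaleC (1/2) (T x + adj T x))"

definition is_norm_on_BH :: "(('a::complex_inner \<Rightarrow> 'a) \<Rightarrow> real) \<Rightarrow> bool" where
  "is_norm_on_BH N \<longleftrightarrow>
     (\<forall>A. bounded_op A \<longrightarrow> 0 \<le> N A) \<and>
     (\<forall>A. bounded_op A \<longrightarrow> (N A = 0 \<longleftrightarrow> A = (\<lambda>x. 0))) \<and>
     (\<forall>A B. bounded_op A \<longrightarrow> bounded_op B \<longrightarrow> N (\<lambda>x. A x + B x) \<le> N A + N B) \<and>
     (\<forall>c A. bounded_op A \<longrightarrow> N (\<lambda>x. scaleC c (A x)) = cmod c * N A)"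

definition wN :: "(('a::complex_inner \<Rightarrow> 'a) \<Rightarrow> real) \<Rightarrow> ('a \<Rightarrow> 'a) \<Rightarrow> real" where
  "wN N T = (SUP \<theta>::real. N (re_op (\<lambda>x. scaleC (exp (\<i> * complex_of_real \<theta>)) (T x))))"

end

theory Submission
  imports Defs
begin



lemma scaleC_zero_left[simp]: "scaleC 0 x = 0"
  using scaleC_of_real[of 0 x] by simp

lemma scaleC_zero_right[simp]: "scaleC a 0 = 0"
  using scaleC_add_right[of a 0 0] by simp

lemma scaleC_minus_right: "scaleC a (- x) = - scaleC a x"
  using scaleC_add_right[of a x "-x"] by (simp add: eq_neg_iff_add_eq_0 add.commute)

lemma scaleC_diff_right: "scaleC a (x - y) = scaleC a x - scaleC a y"
  using scaleC_add_right[of a x "-y"] by (simp add: scaleC_minus_right)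

lemma scaleC_minus_left: "scaleC (- a) x = - scaleC a x"
  using scaleC_add_left[of a "-a" x] by (simp add: eq_neg_iff_add_eq_0 add.commute)

lemma scaleC_diff_left: "scaleC (a - b) x = scaleC a x - scaleC b x"
  using scaleC_add_left[of a "-b" x] by (simp add: scaleC_minus_left)

lemma cinner_zero_right[simp]: "cinner x 0 = 0"
  using cinner_add_right[of x 0 0] by simp

lemma cinner_zero_left[simp]: "cinner 0 x = 0"
  using cinner_conj[of 0 x] by simp

lemma cinner_add_left: "cinner (x + y) z = cinner x z + cinner y z"
  by (metis cinner_conj cinner_add_right complex_cnj_add)

lemma cinner_scaleC_left: "cinner (scaleC c x) y = cnj c * cinner x y"
  by (metis cinner_conj cinner_scaleC_right complex_cnj_mult)

lemma cinner_minus_right: "cinner x (- y) = - cinner x y"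
  using cinner_add_right[of x y "-y"] by (simp add: eq_neg_iff_add_eq_0 add.commute)

lemma cinner_minus_left: "cinner (- x) y = - cinner x y"
  using cinner_add_left[of x "-x" y] by (simp add: eq_neg_iff_add_eq_0 add.commute)

lemma cinner_diff_right: "cinner x (y - z) = cinner x y - cinner x z"
  using cinner_add_right[of x y "-z"] by (simp add: cinner_minus_right)

lemma cinner_diff_left: "cinner (x - y) z = cinner x z - cinner y z"
  using cinner_add_left[of x "-y" z] by (simp add: cinner_minus_left)

lemma cinner_scaleR_right: "cinner x (r *\<^sub>R y) = of_real r * cinner x y"
  by (metis cinner_scaleC_right scaleC_of_real)

lemma cinner_scaleR_left: "cinner (r *\<^sub>R x) y = of_real r * cinner x y"
  by (metis cinner_scaleC_left scaleC_of_real complex_cnj_complex_of_real)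

lemma norm_scaleC: "norm (scaleC c x) = cmod c * norm x"
proof -
  have "complex_of_real ((norm (scaleC c x))\<^sup>2) = cnj c * c * complex_of_real ((norm x)\<^sup>2)"
    by (metis cinner_self_norm cinner_scaleC_left cinner_scaleC_right mult.assoc)
  also have "cnj c * c = complex_of_real ((cmod c)\<^sup>2)"
    by (metis complex_norm_square mult.commute of_real_power)
  finally have "(norm (scaleC c x))\<^sup>2 = ((cmod c * norm x))\<^sup>2"
    by (metis of_real_mult of_real_eq_iff power_mult_distrib)
  then show ?thesis
    by (simp add: power2_eq_iff_nonneg)
qed

lemma cinner_self_eq_0: "cinner x x = 0 \<longleftrightarrow> x = 0"
  by (simp add: cinner_self_norm)

lemma cinner_ext: assumes "\<And>z. cinner z x = cinner z y" shows "x = y"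
proof -
  have "cinner (x - y) (x - y) = 0"
    using assms[of "x - y"] by (simp add: cinner_diff_right)
  then show ?thesis by (simp add: cinner_self_eq_0)
qed

lemma norm_diff_sq: "(norm (x - y))\<^sup>2 = (norm x)\<^sup>2 + (norm y)\<^sup>2 - 2 * Re (cinner x y)"
proof -
  have "cinner (x - y) (x - y) = cinner x x - cinner x y - cinner y x + cinner y y"
    by (simp add: cinner_diff_left cinner_diff_right)
  then have "complex_of_real ((norm (x - y))\<^sup>2) = cinner x x - cinner x y - cinner y x + cinner y y"
    by (simp only: cinner_self_norm)
  then have "(norm (x - y))\<^sup>2 = Re (cinner x x - cinner x y - cinner y x + cinner y y)"
    by (metis Re_complex_of_real)
  also have "\<dots> = (norm x)\<^sup>2 + (norm y)\<^sup>2 - 2 * Re (cinner x y)"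
    using cinner_conj[of y x] by (simp add: cinner_self_norm del: of_real_power)
  finally show ?thesis .
qed

lemma norm_add_sq: "(norm (x + y))\<^sup>2 = (norm x)\<^sup>2 + (norm y)\<^sup>2 + 2 * Re (cinner x y)"
  using norm_diff_sq[of x "-y"] by (simp add: cinner_minus_right)

lemma Re_cinner_le: "Re (cinner x y) \<le> norm x * norm y"
proof (cases "x = 0 \<or> y = 0")
  case True then show ?thesis by auto
next
  case False
  then have nx: "norm x > 0" and ny: "norm y > 0" by auto
  have "0 \<le> (norm (norm y *\<^sub>R x - norm x *\<^sub>R y))\<^sup>2" by simp
  also have "\<dots> = 2 * (norm x)\<^sup>2 * (norm y)\<^sup>2 - 2 * (norm x * norm y) * Re (cinner x y)"
    by (simp add: norm_diff_sq cinner_scaleR_left cinner_scaleR_right power_mult_distrib algebra_simps)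
  finally have "(norm x * norm y) * Re (cinner x y) \<le> (norm x * norm y) * (norm x * norm y)"
    by (simp add: power2_eq_square algebra_simps)
  then show ?thesis using nx ny by simp
qed

lemma cinner_cauchy_schwarz: "cmod (cinner x y) \<le> norm x * norm y"
proof (cases "cinner x y = 0")
  case True then show ?thesis by simp
next
  case False
  define p where "p = cinner x y"
  define c where "c = cnj p / complex_of_real (cmod p)"
  have cm: "cmod c = 1" using False by (simp add: c_def p_def norm_divide)
  have "cinner x (scaleC c y) = c * p" by (simp add: cinner_scaleC_right p_def)
  also have "c * p = complex_of_real (cmod p)"
  proof -
    have "p * cnj p = complex_of_real (cmod p) * complex_of_real (cmod p)"
      by (metis complex_norm_square mult.commute of_real_power power2_eq_square)
    then show ?thesis using False unfolding c_def p_def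
      by (simp add: field_simps)
  qed
  finally have "cmod p = Re (cinner x (scaleC c y))" by simp
  also have "\<dots> \<le> norm x * norm (scaleC c y)" by (rule Re_cinner_le)
  also have "\<dots> = norm x * norm y" by (simp add: norm_scaleC cm)
  finally show ?thesis by (simp add: p_def)
qed



lemma riesz:
  fixes f :: "'a::complex_hilbert \<Rightarrow> complex"
  assumes add: "\<And>x y. f (x + y) = f x + f y"
    and sc: "\<And>c x. f (scaleC c x) = c * f x"
    and bd: "\<And>x. cmod (f x) \<le> K * norm x"
  shows "\<exists>z. \<forall>x. f x = cinner z x"
proof (cases "\<forall>x. f x = 0")
  case True then show ?thesis by (intro exI[of _ 0]) simp
next
  case False
  then obtain x0 where x0: "f x0 \<noteq> 0" by auto
  have f0: "f 0 = 0" using sc[of 0 0] by simp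
  have bl: "bounded_linear f"
  proof (rule bounded_linear_intro[where K=K])
    show "f (x + y) = f x + f y" for x y by (rule add)
    show "f (r *\<^sub>R x) = r *\<^sub>R f x" for r x
      using sc[of "complex_of_real r" x] by (simp add: scaleC_of_real scaleR_conv_of_real)
    show "norm (f x) \<le> norm x * K" for x using bd[of x] by (simp add: mult.commute)
  qed
  define C where "C = {x. f x = 1}"
  have aC: "scaleC (1 / f x0) x0 \<in> C" using x0 by (simp add: C_def sc)
  define d where "d = Inf (norm ` C)"
  have bdd: "bdd_below (norm ` C)" by (rule bdd_belowI[of _ 0]) auto
  have d_le: "d \<le> norm w" if "w \<in> C" for w
    unfolding d_def using bdd that by (simp add: cInf_lower)
  have d0: "0 \<le> d"
    unfolding d_def using aC by (intro cInf_greatest) auto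
  have ex: "\<exists>x\<in>C. (norm x)\<^sup>2 < d\<^sup>2 + inverse (real (Suc n))" for n
  proof -
    define s where "s = sqrt (d\<^sup>2 + inverse (real (Suc n)))"
    have "d < s" unfolding s_def by (rule real_less_rsqrt) simp
    then have "Inf (norm ` C) < s" by (simp add: d_def)
    then obtain x where "x \<in> C" "norm x < s"
      using cInf_less_iff[of "norm ` C" s] aC bdd by auto
    then have "(norm x)\<^sup>2 < s\<^sup>2" by (simp add: power_strict_mono)
    also have "s\<^sup>2 = d\<^sup>2 + inverse (real (Suc n))" unfolding s_def
      by (simp add: add_nonneg_nonneg)
    finally show ?thesis using \<open>x \<in> C\<close> by blast
  qed
  then obtain xs where xs: "\<And>n. xs n \<in> C" "\<And>n. (norm (xs n))\<^sup>2 < d\<^sup>2 + inverse (real (Suc n))"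
    by metis
  have par: "(norm (x - y))\<^sup>2 \<le> 2 * (norm x)\<^sup>2 + 2 * (norm y)\<^sup>2 - 4 * d\<^sup>2" if "x \<in> C" "y \<in> C" for x y
  proof -
    have "(1/2::real) *\<^sub>R (x + y) \<in> C"
      using that sc[of "complex_of_real (1/2)" "x+y"] scaleC_of_real[of "1/2" "x+y"] by (simp add: C_def add)
    then have "d \<le> norm ((1/2::real) *\<^sub>R (x + y))" by (rule d_le)
    then have "2 * d \<le> norm (x + y)" by simp
    then have "(2 * d)\<^sup>2 \<le> (norm (x + y))\<^sup>2" using d0 by (intro power_mono) auto
    then show ?thesis using norm_add_sq[of x y] norm_diff_sq[of x y] by (simp add: power_mult_distrib)
  qed
  have "Cauchy xs"
  proof (rule metric_CauchyI)
    fix e :: real assume e: "0 < e"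
    then obtain M where M: "0 < M" "inverse (real M) < e\<^sup>2 / 4"
      using ex_inverse_of_nat_less[of "e\<^sup>2/4"] by auto
    have "dist (xs m) (xs n) < e" if "m \<ge> M" "n \<ge> M" for m n
    proof -
      have im: "inverse (real (Suc m)) \<le> inverse (real M)" and inn: "inverse (real (Suc n)) \<le> inverse (real M)"
        using that M(1) by (auto intro!: le_imp_inverse_le)
      have "(dist (xs m) (xs n))\<^sup>2 \<le> 2 * (norm (xs m))\<^sup>2 + 2 * (norm (xs n))\<^sup>2 - 4 * d\<^sup>2"
        using par[OF xs(1) xs(1)] by (simp add: dist_norm)
      also have "\<dots> < e\<^sup>2"
        using xs(2)[of m] xs(2)[of n] im inn M(2) by linarith
      finally show ?thesis using e by (simp add: power_less_imp_less_base)
    qed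
    then show "\<exists>M. \<forall>m\<ge>M. \<forall>n\<ge>M. dist (xs m) (xs n) < e" by blast
  qed
  then obtain u where u: "xs \<longlonglongrightarrow> u" using Cauchy_convergent_iff convergent_def by blast
  have "(\<lambda>n. f (xs n)) \<longlonglongrightarrow> f u" by (rule bounded_linear.tendsto[OF bl u])
  moreover have "(\<lambda>n. f (xs n)) = (\<lambda>n. 1)" using xs(1) by (simp add: C_def)
  ultimately have "(\<lambda>n. 1) \<longlonglongrightarrow> f u" by simp
  then have fu: "f u = 1" by (simp add: LIMSEQ_const_iff)
  have "(\<lambda>n. (norm (xs n))\<^sup>2) \<longlonglongrightarrow> (norm u)\<^sup>2" by (intro tendsto_power tendsto_norm u)
  moreover have "(\<lambda>n. d\<^sup>2 + inverse (real (Suc n))) \<longlonglongrightarrow> d\<^sup>2 + 0"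
    by (intro tendsto_add tendsto_const LIMSEQ_inverse_real_of_nat)
  moreover have "\<exists>N. \<forall>n\<ge>N. (norm (xs n))\<^sup>2 \<le> d\<^sup>2 + inverse (real (Suc n))"
    using xs(2) less_imp_le by blast
  ultimately have "(norm u)\<^sup>2 \<le> d\<^sup>2 + 0" by (rule LIMSEQ_le)
  then have nu: "(norm u)\<^sup>2 \<le> d\<^sup>2" by simp
  have orth: "cinner u k = 0" if fk: "f k = 0" for k
  proof -
    define p where "p = cinner u k"
    define s where "s = 1 / ((norm k)\<^sup>2 + 1)"
    have s0: "0 < s" by (simp add: s_def add_nonneg_pos)
    have s1: "s * (norm k)\<^sup>2 < 1" unfolding s_def by (simp add: divide_less_eq) (smt (verit) zero_le_power2)
    define t where "t = - complex_of_real s * cnj p"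
    have "u + scaleC t k \<in> C" using fu fk by (simp add: C_def add sc)
    then have "d \<le> norm (u + scaleC t k)" by (rule d_le)
    then have "d\<^sup>2 \<le> (norm (u + scaleC t k))\<^sup>2" using d0 by (intro power_mono) auto
    also have "\<dots> = (norm u)\<^sup>2 + (cmod t)\<^sup>2 * (norm k)\<^sup>2 + 2 * Re (t * p)"
      by (simp add: norm_add_sq norm_scaleC cinner_scaleC_right p_def power_mult_distrib)
    also have "t * p = - complex_of_real (s * (cmod p)\<^sup>2)"
      unfolding t_def by (simp add: complex_norm_square mult.commute del: of_real_power)
    also have "(cmod t)\<^sup>2 = s\<^sup>2 * (cmod p)\<^sup>2" unfolding t_def using s0
      by (simp add: norm_mult power_mult_distrib)
    finally have "0 \<le> s\<^sup>2 * (cmod p)\<^sup>2 * (norm k)\<^sup>2 - 2 * s * (cmod p)\<^sup>2" using nu by simp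
    then have "0 \<le> s * (cmod p)\<^sup>2 * (s * (norm k)\<^sup>2 - 2)" by (simp add: power2_eq_square algebra_simps)
    moreover have "s * (norm k)\<^sup>2 - 2 < 0" using s1 by simp
    ultimately have "s * (cmod p)\<^sup>2 \<le> 0" by (smt (verit) mult_pos_neg)
    then have "(cmod p)\<^sup>2 \<le> 0" using s0 by (simp add: mult_le_0_iff)
    then show ?thesis by (simp add: p_def)
  qed
  have u0: "u \<noteq> 0" using fu f0 by auto
  define z where "z = scaleC (complex_of_real (1 / (norm u)\<^sup>2)) u"
  have "f x = cinner z x" for x
  proof -
    have "f (x - scaleC (f x) u) = 0"
      using add[of "x - scaleC (f x) u" "scaleC (f x) u"] by (simp add: sc fu)
    then have "cinner u (x - scaleC (f x) u) = 0" by (rule orth)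
    then have "cinner u x = f x * complex_of_real ((norm u)\<^sup>2)"
      by (simp add: cinner_diff_right cinner_scaleC_right cinner_self_norm)
    then show ?thesis using u0 by (simp add: z_def cinner_scaleC_left field_simps)
  qed
  then show ?thesis by blast
qed



lemma scaleC_add_sc: "scaleC a v + scaleC b v = scaleC (a + b) v"
  by (simp add: scaleC_add_left)

lemma bounded_opI:
  fixes T :: "'a::complex_inner \<Rightarrow> 'a"
  assumes "\<And>x y. T (x + y) = T x + T y" "\<And>c x. T (scaleC c x) = scaleC c (T x)"
    "\<And>x. norm (T x) \<le> norm x * K"
  shows "bounded_op T"
  unfolding bounded_op_def
proof (intro conjI allI)
  show "bounded_linear T"
  proof (rule bounded_linear_intro[where K=K])
    show "T (r *\<^sub>R x) = r *\<^sub>R T x" for r x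
      using assms(2)[of "complex_of_real r" x] by (simp add: scaleC_of_real)
  qed (use assms in auto)
qed (use assms in auto)

lemma bounded_opD:
  assumes "bounded_op T"
  shows "T (x + y) = T x + T y" "T (scaleC c x) = scaleC c (T x)" "\<exists>K. \<forall>x. norm (T x) \<le> norm x * K"
  using assms unfolding bounded_op_def
  by (auto simp: linear_simps dest: bounded_linear.bounded)

lemma bop_add: "bounded_op A \<Longrightarrow> bounded_op B \<Longrightarrow> bounded_op (\<lambda>x. A x + B x)"
  unfolding bounded_op_def by (auto intro: bounded_linear_add simp: scaleC_add_right)

lemma bop_diff: "bounded_op A \<Longrightarrow> bounded_op B \<Longrightarrow> bounded_op (\<lambda>x. A x - B x)"
  unfolding bounded_op_def by (auto intro: bounded_linear_sub simp: scaleC_diff_right)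

lemma bop_scale:
  fixes A :: "'a::complex_inner \<Rightarrow> 'a"
  assumes "bounded_op A" shows "bounded_op (\<lambda>x. scaleC c (A x))"
proof -
  obtain K where K: "\<And>x. norm (A x) \<le> norm x * K" using bounded_opD(3)[OF assms] by blast
  show ?thesis
  proof (rule bounded_opI[where K="cmod c * K"])
    show "scaleC c (A (x + y)) = scaleC c (A x) + scaleC c (A y)" for x y
      by (simp add: bounded_opD(1)[OF assms] scaleC_add_right)
    show "scaleC c (A (scaleC d x)) = scaleC d (scaleC c (A x))" for d x
      by (simp add: bounded_opD(2)[OF assms] scaleC_scaleC mult.commute)
    show "norm (scaleC c (A x)) \<le> norm x * (cmod c * K)" for x
      using mult_left_mono[OF K[of x] norm_ge_zero[of c]] by (simp add: norm_scaleC algebra_simps)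
  qed
qed

lemma adj_unique:
  assumes "\<And>x y. cinner (T x) y = cinner x (S y)"
  shows "adj T = S"
  unfolding adj_def
proof (rule the_equality)
  show "\<forall>x y. cinner (T x) y = cinner x (S y)" using assms by auto
  fix S' assume h: "\<forall>x y. cinner (T x) y = cinner x (S' y)"
  have "cinner z (S' y) = cinner z (S y)" for z y
    using h[rule_format, of z y] assms[of z y] by (rule trans[OF sym])
  then show "S' = S" by (intro ext) (rule cinner_ext)
qed

lemma adj_exists:
  fixes T :: "'a::complex_hilbert \<Rightarrow> 'a"
  assumes T: "bounded_op T"
  shows "\<exists>S. \<forall>x y. cinner (T x) y = cinner x (S y)"
proof -
  obtain K where K: "\<And>x. norm (T x) \<le> norm x * K" using bounded_opD(3)[OF T] by blast
  have "\<exists>z. \<forall>x. cinner (T x) y = cinner x z" for y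
  proof -
    have "\<exists>z. \<forall>x. cinner y (T x) = cinner z x"
    proof (rule riesz[where K="norm y * K"])
      show "cinner y (T (x + x')) = cinner y (T x) + cinner y (T x')" for x x'
        by (simp add: bounded_opD(1)[OF T] cinner_add_right)
      show "cinner y (T (scaleC c x)) = c * cinner y (T x)" for c x
        by (simp add: bounded_opD(2)[OF T] cinner_scaleC_right)
      show "cmod (cinner y (T x)) \<le> norm y * K * norm x" for x
      proof -
        have "cmod (cinner y (T x)) \<le> norm y * norm (T x)" by (rule cinner_cauchy_schwarz)
        also have "\<dots> \<le> norm y * (norm x * K)" using K[of x] by (simp add: mult_left_mono)
        finally show ?thesis by (simp add: algebra_simps)
      qed
    qed
    then obtain z where "\<forall>x. cinner y (T x) = cinner z x" by blast
    then have "\<forall>x. cinner (T x) y = cinner x z"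
      using cinner_conj[of "T _" y] cinner_conj[of _ z] by simp
    then show ?thesis by blast
  qed
  then have "\<forall>y. \<exists>z. \<forall>x. cinner (T x) y = cinner x z" by blast
  from choice[OF this] show ?thesis by blast
qed

lemma adj_prop:
  fixes T :: "'a::complex_hilbert \<Rightarrow> 'a"
  assumes "bounded_op T"
  shows "cinner (T x) y = cinner x (adj T y)"
proof -
  obtain S where S: "\<forall>x y. cinner (T x) y = cinner x (S y)" using adj_exists[OF assms] by blast
  then have "adj T = S" by (intro adj_unique) auto
  then show ?thesis using S by simp
qed

lemma adj_prop2:
  fixes T :: "'a::complex_hilbert \<Rightarrow> 'a"
  assumes "bounded_op T"
  shows "cinner (adj T x) y = cinner x (T y)"
  using cinner_conj[of "adj T x" y] cinner_conj[of x "T y"] adj_prop[OF assms, of y x] by simp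

lemma adj_bounded:
  fixes T :: "'a::complex_hilbert \<Rightarrow> 'a"
  assumes T: "bounded_op T"
  shows "bounded_op (adj T)"
proof -
  obtain K0 where K0: "\<And>x. norm (T x) \<le> norm x * K0" using bounded_opD(3)[OF T] by blast
  define K where "K = max K0 0"
  have K: "norm (T x) \<le> norm x * K" for x
    using K0[of x] mult_left_mono[of K0 K "norm x"] by (simp add: K_def)
  have Kpos: "0 \<le> K" by (simp add: K_def)
  show ?thesis
  proof (rule bounded_opI[where K=K])
    show "adj T (x + y) = adj T x + adj T y" for x y
      by (rule cinner_ext) (simp add: adj_prop[OF T, symmetric] cinner_add_right)
    show "adj T (scaleC c x) = scaleC c (adj T x)" for c x
      by (rule cinner_ext) (simp add: adj_prop[OF T, symmetric] cinner_scaleC_right)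
    show "norm (adj T y) \<le> norm y * K" for y
    proof (cases "adj T y = 0")
      case True then show ?thesis using Kpos by simp
    next
      case False
      let ?s = "adj T y"
      have "(norm ?s)\<^sup>2 = Re (cinner ?s ?s)" by (simp add: cinner_self_norm)
      also have "\<dots> = Re (cinner (T ?s) y)" by (simp add: adj_prop[OF T])
      also have "\<dots> \<le> cmod (cinner (T ?s) y)" by (rule complex_Re_le_cmod)
      also have "\<dots> \<le> norm (T ?s) * norm y" by (rule cinner_cauchy_schwarz)
      also have "\<dots> \<le> norm ?s * K * norm y" using K[of ?s] by (simp add: mult_right_mono)
      finally have "norm ?s * norm ?s \<le> norm ?s * (norm y * K)" by (simp add: power2_eq_square algebra_simps)
      then show ?thesis using False by simp
    qed
  qed
qed

lemma re_op_scale: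
  fixes R :: "'a::complex_hilbert \<Rightarrow> 'a"
  assumes R: "bounded_op R"
  shows "re_op (\<lambda>x. scaleC e (R x)) = (\<lambda>x. scaleC (1/2) (scaleC e (R x) + scaleC (cnj e) (adj R x)))"
proof -
  have "adj (\<lambda>x. scaleC e (R x)) = (\<lambda>y. scaleC (cnj e) (adj R y))"
    by (rule adj_unique) (simp add: cinner_scaleC_left cinner_scaleC_right adj_prop[OF R])
  then show ?thesis unfolding re_op_def by simp
qed



lemma sup_att:
  fixes g :: "real \<Rightarrow> real"
  assumes "\<And>t. g t \<le> M" "g u = M"
  shows "(SUP t. g t) = M"
  using assms by (intro cSup_eq_maximum) auto

lemma eul: "exp (\<i> * complex_of_real t) = complex_of_real (cos t) + \<i> * complex_of_real (sin t)"
  by (simp add: complex_eq_iff Re_exp Im_exp)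

lemma cs_bound:
  fixes a b t :: real
  assumes "0 \<le> a" "0 \<le> b"
  shows "\<bar>cos t\<bar> * a + \<bar>sin t\<bar> * b \<le> sqrt (a\<^sup>2 + b\<^sup>2)"
proof (rule real_le_rsqrt)
  have e0: "(x * a + y * b)\<^sup>2 + (x * b - y * a)\<^sup>2 = (x\<^sup>2 + y\<^sup>2) * (a\<^sup>2 + b\<^sup>2)" for x y :: real
    by (simp add: power2_eq_square algebra_simps)
  note e = e0[of "\<bar>cos t\<bar>" "\<bar>sin t\<bar>"]
  have "\<bar>cos t\<bar>\<^sup>2 + \<bar>sin t\<bar>\<^sup>2 = 1" by simp
  with e have "(\<bar>cos t\<bar> * a + \<bar>sin t\<bar> * b)\<^sup>2 + (\<bar>cos t\<bar> * b - \<bar>sin t\<bar> * a)\<^sup>2 = a\<^sup>2 + b\<^sup>2"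
    by simp
  then show "(\<bar>cos t\<bar> * a + \<bar>sin t\<bar> * b)\<^sup>2 \<le> a\<^sup>2 + b\<^sup>2"
    using zero_le_power2[of "\<bar>cos t\<bar> * b - \<bar>sin t\<bar> * a"] by linarith
qed

theorem corollary2p9:
  fixes T :: "'a::complex_hilbert \<Rightarrow> 'a"
    and N :: "('a \<Rightarrow> 'a) \<Rightarrow> real"
  assumes "is_norm_on_BH N"
    and "bounded_op T"
  shows "1/2 * max (wN N (\<lambda>x. T x + adj T x)) (wN N (\<lambda>x. T x - adj T x)) \<le> wN N T
       \<and> wN N T \<le> 1/2 * sqrt ((wN N (\<lambda>x. T x + adj T x))\<^sup>2 + (wN N (\<lambda>x. T x - adj T x))\<^sup>2)"
proof -
  note bT = assms(2)
  have Nnn: "\<And>A. bounded_op A \<Longrightarrow> 0 \<le> N A"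
    and Nadd: "\<And>A B. bounded_op A \<Longrightarrow> bounded_op B \<Longrightarrow> N (\<lambda>x. A x + B x) \<le> N A + N B"
    and Nsc: "\<And>c A. bounded_op A \<Longrightarrow> N (\<lambda>x. scaleC c (A x)) = cmod c * N A"
    using assms(1) unfolding is_norm_on_BH_def by blast+
  have bS: "bounded_op (adj T)" by (rule adj_bounded[OF bT])
  define A where "A = (\<lambda>x. T x + adj T x)"
  define B where "B = (\<lambda>x. T x - adj T x)"
  have bA: "bounded_op A" unfolding A_def by (rule bop_add[OF bT bS])
  have bB: "bounded_op B" unfolding B_def by (rule bop_diff[OF bT bS])
  have adjA: "adj A = A"
    by (rule adj_unique) (simp add: A_def cinner_add_left cinner_add_right adj_prop[OF bT] adj_prop2[OF bT])
  have adjB: "adj B = (\<lambda>y. - B y)"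
    by (rule adj_unique) (simp add: B_def cinner_diff_left cinner_diff_right cinner_minus_right adj_prop[OF bT] adj_prop2[OF bT])
  have reA: "re_op (\<lambda>x. scaleC (exp (\<i> * complex_of_real t)) (A x)) = (\<lambda>x. scaleC (complex_of_real (cos t)) (A x))" for t
    unfolding re_op_scale[OF bA] adjA
    by (intro ext, rule cinner_ext) (simp add: cinner_add_right cinner_scaleC_right eul algebra_simps)
  have reB: "re_op (\<lambda>x. scaleC (exp (\<i> * complex_of_real t)) (B x)) = (\<lambda>x. scaleC (\<i> * complex_of_real (sin t)) (B x))" for t
    unfolding re_op_scale[OF bB] adjB
    by (intro ext, rule cinner_ext) (simp add: cinner_add_right cinner_scaleC_right cinner_minus_right eul algebra_simps)
  have reT: "re_op (\<lambda>x. scaleC (exp (\<i> * complex_of_real t)) (T x))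
     = (\<lambda>x. scaleC (1/2) (scaleC (complex_of_real (cos t)) (A x) + scaleC (\<i> * complex_of_real (sin t)) (B x)))" for t
    unfolding re_op_scale[OF bT] A_def B_def
    by (intro ext, rule cinner_ext) (simp add: cinner_add_right cinner_diff_right cinner_scaleC_right eul algebra_simps)
  have wA: "wN N A = N A"
    unfolding wN_def reA
  proof (rule sup_att[where u=0])
    show "N (\<lambda>x. scaleC (complex_of_real (cos t)) (A x)) \<le> N A" for t
      using Nnn[OF bA] abs_cos_le_one[of t] by (simp add: Nsc[OF bA] mult_left_le_one_le)
    show "N (\<lambda>x. scaleC (complex_of_real (cos 0)) (A x)) = N A"
      using Nsc[OF bA, of 1] by (simp add: scaleC_one)
  qed
  have wB: "wN N B = N B"
    unfolding wN_def reB
  proof (rule sup_att[where u="pi/2"])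
    show "N (\<lambda>x. scaleC (\<i> * complex_of_real (sin t)) (B x)) \<le> N B" for t
      using Nnn[OF bB] abs_sin_le_one[of t] by (simp add: Nsc[OF bB] norm_mult mult_left_le_one_le)
    show "N (\<lambda>x. scaleC (\<i> * complex_of_real (sin (pi/2))) (B x)) = N B"
      using Nsc[OF bB, of \<i>] by simp
  qed
  define M where "M = 1/2 * sqrt ((N A)\<^sup>2 + (N B)\<^sup>2)"
  define g where "g = (\<lambda>t. N (re_op (\<lambda>x. scaleC (exp (\<i> * complex_of_real t)) (T x))))"
  have gT: "g t = 1/2 * N (\<lambda>x. scaleC (complex_of_real (cos t)) (A x) + scaleC (\<i> * complex_of_real (sin t)) (B x))" for t
  proof -
    have "g t = N (\<lambda>x. scaleC (1/2) ((\<lambda>x. scaleC (complex_of_real (cos t)) (A x) + scaleC (\<i> * complex_of_real (sin t)) (B x)) x))"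
      by (simp add: g_def reT)
    also have "\<dots> = 1/2 * N (\<lambda>x. scaleC (complex_of_real (cos t)) (A x) + scaleC (\<i> * complex_of_real (sin t)) (B x))"
      using Nsc[OF bop_add[OF bop_scale[OF bA] bop_scale[OF bB]], of "1/2"] by simp
    finally show ?thesis .
  qed
  have gle: "g t \<le> M" for t
  proof -
    have "N (\<lambda>x. scaleC (complex_of_real (cos t)) (A x) + scaleC (\<i> * complex_of_real (sin t)) (B x))
        \<le> N (\<lambda>x. scaleC (complex_of_real (cos t)) (A x)) + N (\<lambda>x. scaleC (\<i> * complex_of_real (sin t)) (B x))"
      using Nadd[OF bop_scale[OF bA] bop_scale[OF bB]] by simp
    also have "\<dots> = \<bar>cos t\<bar> * N A + \<bar>sin t\<bar> * N B"
      by (simp add: Nsc[OF bA] Nsc[OF bB] norm_mult)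
    also have "\<dots> \<le> sqrt ((N A)\<^sup>2 + (N B)\<^sup>2)" by (rule cs_bound[OF Nnn[OF bA] Nnn[OF bB]])
    finally show ?thesis by (simp add: gT M_def)
  qed
  have wT: "wN N T = (SUP t. g t)" by (simp add: wN_def g_def)
  have bdd: "bdd_above (range g)" using gle by (intro bdd_aboveI2) 
  have up: "wN N T \<le> M" unfolding wT by (rule cSUP_least) (auto intro: gle)
  have g0: "g 0 = 1/2 * N A"
    using gT[of 0] by (simp add: scaleC_one)
  have g1: "g (pi/2) = 1/2 * N B"
    using gT[of "pi/2"] Nsc[OF bB, of \<i>] by simp
  have l1: "1/2 * N A \<le> wN N T" unfolding wT g0[symmetric] by (rule cSUP_upper[OF _ bdd]) simp
  have l2: "1/2 * N B \<le> wN N T" unfolding wT g1[symmetric] by (rule cSUP_upper[OF _ bdd]) simp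
  show ?thesis
    using l1 l2 up wA wB unfolding M_def A_def B_def by (simp add: max_def)
qed


end
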